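(* Let $k\ge 2$ and let $\lambda$ be an integer partition of length $k$ whose parts are not all equal. Then $|\lambda^{\perp B}|$ is at most the sum of the four largest of the binomial coefficients $\binom{k-2}{0},\binom{k-2}{1},\dots,\binom{k-2}{k-2}$ (the sum of all of them if there are fewer than four). Consequently: (a) if $k\ge 2$ is even, then $|(1^k)^{\perp B}|>|\mu^{\perp B}|$ for every partition $\mu$ of length $k$ whose parts are not all equal; (b) if $k\ge 5$ is odd, then $|(2,1^{k-1})^{\perp B}|\ge|\mu^{\perp B}|$ for every partition $\mu$ of length $k$.
   Context: An integer partition is $\lambda=(\lambda_1,\dots,\lambda_k)$ with integers $\lambda_1\ge\dots\ge\lambda_k\ge 1$; $k$ is its length. $1^k$ denotes the partition with $k$ parts equal to $1$, and $(2,1^{k-1})$ the partition with one part $2$ and $k-1$ parts $1$. For a partition $\lambda$, $\lambda^{\perp B}=\{x\in\{-1,1\}^k:\lambda_1x_1+\dots+\lambda_kx_k=0\}$. *)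

theory Defs
  imports Main
begin

definition is_partition :: "nat list \<Rightarrow> bool" where
  "is_partition l \<longleftrightarrow> sorted (rev l) \<and> (\<forall>x\<in>set l. 1 \<le> x)"

definition all_parts_equal :: "nat list \<Rightarrow> bool" where
  "all_parts_equal l \<longleftrightarrow> (\<forall>x\<in>set l. \<forall>y\<in>set l. x = y)"

definition perpB :: "nat list \<Rightarrow> int list set" where
  "perpB l = {x. length x = length l \<and> set x \<subseteq> {-1, 1} \<and>
                 (\<Sum>i<length l. int (l ! i) * x ! i) = 0}"

definition top4_binom_sum :: "nat \<Rightarrow> nat" where
  "top4_binom_sum k =
     sum_list (take 4 (rev (sort (map (\<lambda>j. (k - 2) choose j) [0..<k - 1]))))"

end

theory Submission
  imports Defs Complex_Main "HOL-Combinatorics.List_Permutation"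
begin

definition F :: "nat \<Rightarrow> nat \<Rightarrow> nat" where
  "F n s = (\<Sum>j\<le>n. (if n < 2*j+s \<and> 2*j \<le> n+s then n choose j else 0))"

lemma F_0s: "F 0 s = (if 0 < s then 1 else 0)"
  by (simp add: F_def)

lemma F_n0: "F n 0 = 0"
  by (simp add: F_def)

lemma pascal_sum:
  fixes w :: "nat \<Rightarrow> nat"
  shows "(\<Sum>j\<le>Suc n. w j * (Suc n choose j)) = (\<Sum>i\<le>n. (w i + w (Suc i)) * (n choose i))"
proof -
  have 1: "(\<Sum>j\<le>Suc n. w j * (Suc n choose j)) = w 0 + (\<Sum>i\<le>n. w (Suc i) * (Suc n choose Suc i))"
    by (subst sum.atMost_Suc_shift) simp
  have 2: "(\<Sum>i\<le>n. w (Suc i) * (Suc n choose Suc i)) = (\<Sum>i\<le>n. w (Suc i) * (n choose i)) + (\<Sum>i\<le>n. w (Suc i) * (n choose Suc i))"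
    by (simp add: algebra_simps sum.distrib)
  have 3: "w 0 + (\<Sum>i\<le>n. w (Suc i) * (n choose Suc i)) = (\<Sum>i\<le>Suc n. w i * (n choose i))"
    by (subst sum.atMost_Suc_shift) simp
  have 4: "(\<Sum>i\<le>Suc n. w i * (n choose i)) = (\<Sum>i\<le>n. w i * (n choose i))" by simp
  have 5: "(\<Sum>i\<le>n. (w i + w (Suc i)) * (n choose i)) = (\<Sum>i\<le>n. w i * (n choose i)) + (\<Sum>i\<le>n. w (Suc i) * (n choose i))"
    by (simp add: algebra_simps sum.distrib)
  show ?thesis using 1 2 3 4 5 by simp
qed

lemma F_rec: assumes "1 \<le> s" shows "F (Suc n) s = F n (s+1) + F n (s-1)"
proof -
  define w where "w = (\<lambda>j. if Suc n < 2*j+s \<and> 2*j \<le> Suc n+s then 1 else (0::nat))"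
  have "F (Suc n) s = (\<Sum>j\<le>Suc n. w j * (Suc n choose j))"
    unfolding F_def w_def by (intro sum.cong) auto
  also have "\<dots> = (\<Sum>i\<le>n. (w i + w (Suc i)) * (n choose i))" by (rule pascal_sum)
  also have "\<dots> = (\<Sum>i\<le>n. (if n < 2*i+(s+1) \<and> 2*i \<le> n+(s+1) then n choose i else 0)
       + (if n < 2*i+(s-1) \<and> 2*i \<le> n+(s-1) then n choose i else 0))"
    by (intro sum.cong) (use assms in \<open>auto simp: w_def\<close>)
  also have "\<dots> = F n (s+1) + F n (s-1)" by (simp add: F_def sum.distrib)
  finally show ?thesis .
qed

lemma F_mono1: "F n s \<le> F n (Suc s)"
  unfolding F_def by (intro sum_mono) auto

lemma F_mono: "s \<le> t \<Longrightarrow> F n s \<le> F n t"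
  by (induction t rule: dec_induct) (auto intro: order_trans F_mono1)

lemma F_conc: "F n (s+2) + F n s \<le> 2 * F n (s+1)"
proof (induction n arbitrary: s)
  case 0 then show ?case by (simp add: F_0s)
next
  case (Suc n)
  show ?case
  proof (cases s)
    case 0
    have "F (Suc n) 2 = F n 3 + F n 1" using F_rec[of 2 n] by simp
    moreover have "F (Suc n) 1 = F n 2" using F_rec[of 1 n] by (simp add: F_n0 numeral_2_eq_2)
    moreover have "F n 3 + F n 1 \<le> 2 * F n 2" using Suc.IH[of 1] by (simp add: numeral_3_eq_3 numeral_2_eq_2)
    ultimately show ?thesis using 0 by (simp add: F_n0 numeral_2_eq_2)
  next
    case (Suc r)
    have "F (Suc n) (s+2) = F n (r+4) + F n (r+2)" using F_rec[of "s+2" n] Suc by (simp add: eval_nat_numeral)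
    moreover have "F (Suc n) s = F n (r+2) + F n r" using F_rec[of "s" n] Suc by (simp add: eval_nat_numeral)
    moreover have "F (Suc n) (s+1) = F n (r+3) + F n (r+1)" using F_rec[of "s+1" n] Suc by (simp add: eval_nat_numeral)
    moreover have "F n (r+4) + F n (r+2) \<le> 2 * F n (r+3)" using Suc.IH[of "r+2"] by (simp add: eval_nat_numeral)
    moreover have "F n (r+2) + F n r \<le> 2 * F n (r+1)" using Suc.IH[of "r"] by simp
    ultimately show ?thesis by simp
  qed
qed

lemma F_delta: "a \<le> b \<Longrightarrow> F n (Suc b) + F n a \<le> F n (Suc a) + F n b"
proof (induction b rule: dec_induct)
  case base then show ?case by simp
next
  case (step b)
  have "F n (b+2) + F n b \<le> 2 * F n (b+1)" by (rule F_conc)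
  with step.IH show ?case by simp
qed

lemma F_spread: "F n (t+d) + F n (t-d) \<le> F n (t+1) + F n (t-1)" if "1 \<le> d" "d \<le> t"
  using that
proof (induction d rule: dec_induct)
  case base then show ?case by simp
next
  case (step d)
  have "F n (Suc (t+d)) + F n (t - Suc d) \<le> F n (Suc (t - Suc d)) + F n (t+d)"
    by (rule F_delta) simp
  moreover have "Suc (t - Suc d) = t - d" using step by simp
  ultimately show ?case using step by simp
qed

fun dot :: "int list \<Rightarrow> int list \<Rightarrow> int" where
  "dot (a#as) (y#ys) = a*y + dot as ys"
| "dot _ _ = 0"

definition sv :: "nat \<Rightarrow> int list set" where
  "sv n = {y. length y = n \<and> set y \<subseteq> {-1,1}}"

definition NN :: "int list \<Rightarrow> int set \<Rightarrow> nat" where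
  "NN a V = card {y\<in>sv (length a). dot a y \<in> V}"

lemma finite_sv: "finite (sv n)"
proof -
  have "sv n \<subseteq> {xs. set xs \<subseteq> {-1,1::int} \<and> length xs = n}" by (auto simp: sv_def)
  thus ?thesis by (rule finite_subset) (rule finite_lists_length_eq, simp)
qed

lemma sv_Suc: "sv (Suc n) = Cons 1 ` sv n \<union> Cons (-1) ` sv n"
  by (auto simp: sv_def length_Suc_conv image_def)

lemma NN_cons: "NN (c#a) V = NN a ((\<lambda>v. v - c) ` V) + NN a ((\<lambda>v. v + c) ` V)"
proof -
  let ?A = "{y\<in>sv (length a). dot a y \<in> (\<lambda>v. v - c) ` V}"
  let ?B = "{y\<in>sv (length a). dot a y \<in> (\<lambda>v. v + c) ` V}"
  have eq: "{y\<in>sv (length (c#a)). dot (c#a) y \<in> V} = Cons 1 ` ?A \<union> Cons (-1) ` ?B"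
  proof -
    have i1: "c + dot a y \<in> V \<longleftrightarrow> dot a y \<in> (\<lambda>v. v - c) ` V" for y
      by (auto simp: image_def) (metis add.commute add_diff_cancel_right')
    have i2: "dot a y - c \<in> V \<longleftrightarrow> dot a y \<in> (\<lambda>v. v + c) ` V" for y
      by (auto simp: image_def) (metis diff_add_cancel)
    have "y \<in> {y\<in>sv (length (c#a)). dot (c#a) y \<in> V} \<longleftrightarrow> y \<in> Cons 1 ` ?A \<union> Cons (-1) ` ?B" for y
    proof (cases y)
      case Nil then show ?thesis by (auto simp: sv_def)
    next
      case (Cons h ys)
      have "y \<in> Cons 1 ` ?A \<union> Cons (-1) ` ?B \<longleftrightarrow> (h = 1 \<and> ys \<in> ?A) \<or> (h = -1 \<and> ys \<in> ?B)"
        using Cons by auto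
      also have "\<dots> \<longleftrightarrow> y \<in> {y\<in>sv (length (c#a)). dot (c#a) y \<in> V}"
        using Cons i1[of ys] i2[of ys] by (auto simp: sv_def)
      finally show ?thesis by simp
    qed
    thus ?thesis by blast
  qed
  have fA: "finite ?A" "finite ?B" using finite_sv by auto
  have "card (Cons 1 ` ?A \<union> Cons (-1) ` ?B) = card (Cons 1 ` ?A) + card (Cons (-1) ` ?B)"
    by (rule card_Un_disjoint) (use fA in auto)
  also have "\<dots> = card ?A + card ?B" by (simp add: card_image)
  finally show ?thesis unfolding NN_def using eq by simp
qed

lemma NN_Un_Int: "NN a W1 + NN a W2 = NN a (W1 \<union> W2) + NN a (W1 \<inter> W2)"
proof -
  let ?A = "{y\<in>sv (length a). dot a y \<in> W1}"
  let ?B = "{y\<in>sv (length a). dot a y \<in> W2}"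
  have "card ?A + card ?B = card (?A \<union> ?B) + card (?A \<inter> ?B)"
    by (rule card_Un_Int) (use finite_sv in auto)
  moreover have "?A \<union> ?B = {y\<in>sv (length a). dot a y \<in> W1 \<union> W2}" by auto
  moreover have "?A \<inter> ?B = {y\<in>sv (length a). dot a y \<in> W1 \<inter> W2}" by auto
  ultimately show ?thesis unfolding NN_def by simp
qed

lemma NN_empty: "NN a {} = 0" by (simp add: NN_def)

lemma NN_Un: "W1 \<inter> W2 = {} \<Longrightarrow> NN a (W1 \<union> W2) = NN a W1 + NN a W2"
  using NN_Un_Int[of a W1 W2] by (simp add: NN_empty)

lemma NN_nil: "NN [] V = (if 0 \<in> V then 1 else 0)"
proof -
  have "sv 0 = {[]}" by (auto simp: sv_def)
  thus ?thesis by (auto simp: NN_def)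
qed

lemma LO: "\<forall>x\<in>set a. x > 0 \<Longrightarrow> finite V \<Longrightarrow> NN a V \<le> F (length a) (card V)"
proof (induction a arbitrary: V)
  case Nil
  show ?case using Nil by (auto simp: NN_nil F_0s card_gt_0_iff)
next
  case (Cons c a)
  show ?case
  proof (cases "V = {}")
    case True then show ?thesis by (simp add: NN_empty)
  next
    case False
    define t where "t = card V"
    have t1: "1 \<le> t" using False Cons.prems by (simp add: t_def Suc_le_eq card_gt_0_iff)
    have c0: "c > 0" using Cons.prems by simp
    define W1 where "W1 = (\<lambda>v. v - c) ` V"
    define W2 where "W2 = (\<lambda>v. v + c) ` V"
    have fin: "finite W1" "finite W2" using Cons.prems by (auto simp: W1_def W2_def)
    have cW: "card W1 = t" "card W2 = t" unfolding W1_def W2_def t_def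
      by (auto intro!: card_image inj_onI)
    have "Max V + c \<in> W2" using False Cons.prems by (auto simp: W2_def)
    moreover have "Max V + c \<notin> W1"
    proof
      assume "Max V + c \<in> W1"
      then obtain v where "v \<in> V" "Max V + c = v - c" by (auto simp: W1_def)
      moreover have "v \<le> Max V" using \<open>v\<in>V\<close> Cons.prems by simp
      ultimately show False using c0 by simp
    qed
    ultimately have "W1 \<subset> W1 \<union> W2" by blast
    hence u: "t < card (W1 \<union> W2)" using cW fin by (metis psubset_card_mono finite_Un)
    have sum2: "card (W1 \<union> W2) + card (W1 \<inter> W2) = 2 * t"
      using card_Un_Int[OF fin] cW by simp
    define u where "u = card (W1 \<union> W2)"
    define d where "d = u - t"
    have d1: "1 \<le> d" "d \<le> t" using u sum2 by (auto simp: d_def u_def)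
    have ci: "card (W1 \<inter> W2) = t - d" using sum2 u by (simp add: d_def u_def)
    have "NN (c#a) V = NN a W1 + NN a W2" by (simp add: NN_cons W1_def W2_def)
    also have "\<dots> = NN a (W1 \<union> W2) + NN a (W1 \<inter> W2)" by (rule NN_Un_Int)
    also have "\<dots> \<le> F (length a) u + F (length a) (t - d)"
      using Cons.IH[of "W1 \<union> W2"] Cons.IH[of "W1 \<inter> W2"] Cons.prems fin ci
      by (auto simp: u_def intro!: add_mono)
    also have "u = t + d" using u by (simp add: d_def u_def)
    also have "F (length a) (t+d) + F (length a) (t - d) \<le> F (length a) (t+1) + F (length a) (t-1)"
      by (rule F_spread) (use d1 in auto)
    also have "\<dots> = F (length (c#a)) t" using F_rec[of t "length a"] t1 by simp
    finally show ?thesis by (simp add: t_def)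
  qed
qed

lemma sum_dot: "length x = length l \<Longrightarrow> (\<Sum>i<length l. int (l ! i) * x ! i) = dot (map int l) x"
proof (induction l arbitrary: x)
  case Nil then show ?case by simp
next
  case (Cons h l)
  then obtain z zs where x: "x = z # zs" by (cases x) auto
  have "(\<Sum>i<length (h#l). int ((h#l) ! i) * x ! i) = int h * z + (\<Sum>i<length l. int (l ! i) * zs ! i)"
    unfolding x length_Cons sum.lessThan_Suc_shift by simp
  then show ?case using Cons x by simp
qed

lemma card_perpB: "card (perpB l) = NN (map int l) {0}"
proof -
  have "perpB l = {y\<in>sv (length (map int l)). dot (map int l) y \<in> {0}}"
    by (auto simp: perpB_def sv_def sum_dot)
  thus ?thesis by (simp add: NN_def)
qed

lemma NN_swap: "NN (c#b#m) V = NN (b#c#m) V"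
proof -
  have e: "(\<lambda>v. v + p) ` ((\<lambda>v. v + q) ` V) = (\<lambda>v. v + q) ` ((\<lambda>v. v + p) ` V)" for p q :: int
    by (simp add: image_image add.assoc add.commute[of p q])
  have "NN (c#b#m) V = NN m ((\<lambda>v. v + (-b)) ` ((\<lambda>v. v + (-c)) ` V)) + NN m ((\<lambda>v. v + b) ` ((\<lambda>v. v + (-c)) ` V))
     + (NN m ((\<lambda>v. v + (-b)) ` ((\<lambda>v. v + c) ` V)) + NN m ((\<lambda>v. v + b) ` ((\<lambda>v. v + c) ` V)))"
    by (simp add: NN_cons)
  also have "\<dots> = NN m ((\<lambda>v. v + (-c)) ` ((\<lambda>v. v + (-b)) ` V)) + NN m ((\<lambda>v. v + c) ` ((\<lambda>v. v + (-b)) ` V))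
     + (NN m ((\<lambda>v. v + (-c)) ` ((\<lambda>v. v + b) ` V)) + NN m ((\<lambda>v. v + c) ` ((\<lambda>v. v + b) ` V)))"
    by (simp only: e)
  also have "\<dots> = NN (b#c#m) V" by (simp add: NN_cons)
  finally show ?thesis .
qed

lemma NN_snoc: "NN (m @ [b]) V = NN (b # m) V"
proof (induction m arbitrary: V)
  case Nil then show ?case by simp
next
  case (Cons c m)
  have "NN ((c#m) @ [b]) V = NN (c # b # m) V" by (simp add: NN_cons Cons.IH)
  also have "\<dots> = NN (b # c # m) V" by (rule NN_swap)
  finally show ?case .
qed

lemma NN_insert: "v \<notin> W \<Longrightarrow> NN a (insert v W) = NN a {v} + NN a W"
  using NN_Un[of "{v}" W a] by simp

lemma two_distinct:
  assumes "a > 0" "b > 0" "a \<noteq> b" "\<forall>x\<in>set m. x > 0"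
  shows "NN (a#b#m) {0} \<le> F (length m) 4"
proof -
  have s1: "NN (a#b#m) {0} = NN (b#m) {-a} + NN (b#m) {a}" by (simp add: NN_cons)
  have s2: "NN (b#m) {v} = NN m {v - b} + NN m {v+b}" for v by (simp add: NN_cons)
  have d: "-a-b \<notin> {-a+b, a-b, a+b}" "-a+b \<notin> {a-b, a+b}" "a-b \<notin> {a+b}"
    using assms by auto
  have "NN m {-a-b, -a+b, a-b, a+b} = NN m {-a-b} + (NN m {-a+b} + (NN m {a-b} + NN m {a+b}))"
    by (subst NN_insert[OF d(1)], subst NN_insert[OF d(2)], subst NN_insert[OF d(3)]) (rule refl)
  also have "\<dots> = NN (a#b#m) {0}" using s1 s2[of "-a"] s2[of a] by simp
  finally have e: "NN (a#b#m) {0} = NN m {-a-b, -a+b, a-b, a+b}" by simp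
  have c4: "card {-a-b, -a+b, a-b, a+b} = 4" using d by simp
  have "NN m {-a-b, -a+b, a-b, a+b} \<le> F (length m) (card {-a-b, -a+b, a-b, a+b})"
    by (rule LO) (use assms in auto)
  thus ?thesis using e c4 by simp
qed

lemma NN_mid: "NN (c # m @ [b]) V = NN (c # b # m) V"
  by (simp add: NN_cons NN_snoc)

lemma part_bound:
  assumes "is_partition l" "length l = k" "2 \<le> k" "\<not> all_parts_equal l"
  shows "card (perpB l) \<le> F (k-2) 4"
proof -
  obtain a r where l1: "l = a # r" using assms by (cases l) auto
  have "r \<noteq> []" using assms l1 by auto
  then obtain m b where r: "r = m @ [b]" by (metis append_butlast_last_id)
  have l: "l = a # m @ [b]" using l1 r by simp
  have srt: "sorted (b # rev m @ [a])" using assms(1) l by (simp add: is_partition_def)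
  have bnd: "\<forall>x\<in>set l. b \<le> x \<and> x \<le> a"
    using srt unfolding l by (auto simp: sorted_append)
  have ab: "a \<noteq> b"
  proof
    assume "a = b"
    hence "\<forall>x\<in>set l. x = a" using bnd by (metis antisym)
    hence "all_parts_equal l" unfolding all_parts_equal_def by metis
    thus False using assms by simp
  qed
  have pos: "\<forall>x\<in>set l. 1 \<le> x" using assms(1) by (simp add: is_partition_def)
  have "card (perpB l) = NN (int a # map int m @ [int b]) {0}" by (simp add: card_perpB l)
  also have "\<dots> = NN (int a # int b # map int m) {0}" by (rule NN_mid)
  also have "\<dots> \<le> F (length (map int m)) 4"
    by (rule two_distinct) (use pos ab in \<open>auto simp: l\<close>)
  also have "length (map int m) = k - 2" using assms l by simp
  finally show ?thesis .
qed

lemma dot_ones_ge: "y \<in> sv n \<Longrightarrow> dot (replicate n 1) y \<ge> - int n"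
proof (induction n arbitrary: y)
  case 0 then show ?case by simp
next
  case (Suc n)
  then obtain h ys where y: "y = h # ys" "h \<in> {-1,1}" "ys \<in> sv n" by (auto simp: sv_def length_Suc_conv)
  have "dot (replicate n 1) ys \<ge> - int n" using Suc.IH y by simp
  thus ?case using y by auto
qed

lemma dot_ones_par: "y \<in> sv n \<Longrightarrow> \<exists>p. dot (replicate n 1) y = 2 * int p - int n"
proof (induction n arbitrary: y)
  case 0 then show ?case by simp
next
  case (Suc n)
  then obtain h ys where y: "y = h # ys" "h \<in> {-1,1}" "ys \<in> sv n" by (auto simp: sv_def length_Suc_conv)
  obtain p where p: "dot (replicate n 1) ys = 2 * int p - int n" using Suc.IH y by blast
  show ?case
  proof (cases "h = 1")
    case True
    thus ?thesis using y p by (intro exI[of _ "Suc p"]) simp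
  next
    case False
    hence "h = -1" using y by simp
    thus ?thesis using y p by (intro exI[of _ p]) simp
  qed
qed

lemma dot_rep: "dot (replicate n c) y = c * dot (replicate n 1) y"
proof (induction n arbitrary: y)
  case 0 then show ?case by simp
next
  case (Suc n) then show ?case by (cases y) (simp_all add: distrib_left)
qed

lemma NN_ones: "NN (replicate n 1) {2 * int p - int n} = n choose p"
proof (induction n arbitrary: p)
  case 0
  show ?case by (cases p) (simp_all add: NN_nil)
next
  case (Suc n)
  have rec: "NN (replicate (Suc n) 1) {v} = NN (replicate n 1) {v - 1} + NN (replicate n 1) {v + 1}" for v
    by (simp add: NN_cons)
  show ?case
  proof (cases p)
    case 0
    have "NN (replicate n 1) {- int n - 2} = 0"
    proof -
      have "{y \<in> sv (length (replicate n (1::int))). dot (replicate n 1) y \<in> {- int n - 2}} = {}"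
        using dot_ones_ge[of _ n] by fastforce
      thus ?thesis unfolding NN_def by (simp only: card.empty)
    qed
    moreover have "NN (replicate n 1) {2 * int 0 - int n} = 1" using Suc.IH[of 0] by simp
    ultimately show ?thesis using rec[of "- int (Suc n)"] 0 by (simp add: algebra_simps)
  next
    case (Suc q)
    have "NN (replicate (Suc n) 1) {2 * int p - int (Suc n)} =
       NN (replicate n 1) {2 * int q - int n} + NN (replicate n 1) {2 * int (Suc q) - int n}"
      using rec[of "2 * int p - int (Suc n)"] Suc by (simp add: algebra_simps)
    also have "\<dots> = (n choose q) + (n choose Suc q)" using Suc.IH[of q] Suc.IH[of "Suc q"] by simp
    finally show ?thesis using Suc by simp
  qed
qed

lemma F_set: "F n s = (\<Sum>j\<in>{j. n < 2*j+s \<and> 2*j \<le> n+s}. n choose j)"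
proof -
  have "F n s = (\<Sum>j\<in>{j\<in>{..n}. n < 2*j+s \<and> 2*j \<le> n+s}. n choose j)"
    unfolding F_def by (rule sum.inter_filter[symmetric]) simp
  also have "\<dots> = (\<Sum>j\<in>{j. n < 2*j+s \<and> 2*j \<le> n+s}. n choose j)"
  proof (rule sum.mono_neutral_left)
    show "finite {j. n < 2*j+s \<and> 2*j \<le> n+s}"
      by (rule finite_subset[of _ "{..n+s}"]) auto
  qed auto
  finally show ?thesis .
qed

lemma card_le_sum:
  fixes g :: "nat \<Rightarrow> nat"
  assumes "finite A" "finite B" "card A \<le> card B" "\<forall>a\<in>A. \<forall>b\<in>B. g a \<le> g b"
  shows "sum g A \<le> sum g B"
proof (cases "A = {}")
  case True then show ?thesis by simp
next
  case False
  define K where "K = Max (g ` A)"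
  have K: "K \<in> g ` A" using False assms(1) by (simp add: K_def)
  have "sum g A \<le> card A * K" using sum_bounded_above[of A g K] assms(1) by (simp add: K_def)
  also have "\<dots> \<le> card B * K" using assms(3) by simp
  also have "\<dots> \<le> sum g B" using sum_bounded_below[of B K g] K assms(4) by auto
  finally show ?thesis .
qed

lemma sum_top:
  fixes ys :: "nat list"
  assumes desc: "\<forall>i j. i \<le> j \<longrightarrow> j < length ys \<longrightarrow> ys ! j \<le> ys ! i"
    and S: "S \<subseteq> {..<length ys}" and cS: "card S \<le> m"
  shows "sum ((!) ys) S \<le> sum_list (take m ys)"
proof -
  define L where "L = {..<min m (length ys)}"
  have fS: "finite S" using S finite_subset by blast
  have fL: "finite L" by (simp add: L_def)
  have "sum_list (take m ys) = (\<Sum>i\<in>{0..<length (take m ys)}. take m ys ! i)"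
    by (rule sum_list_sum_nth)
  also have "\<dots> = sum ((!) ys) L" unfolding L_def
    by (intro sum.cong) auto
  finally have tl: "sum_list (take m ys) = sum ((!) ys) L" .
  have sS: "sum ((!) ys) S = sum ((!) ys) (S \<inter> L) + sum ((!) ys) (S - L)"
    using fS by (rule sum.Int_Diff)
  have sL: "sum ((!) ys) L = sum ((!) ys) (L \<inter> S) + sum ((!) ys) (L - S)"
    using fL by (rule sum.Int_Diff)
  have "sum ((!) ys) (S - L) \<le> sum ((!) ys) (L - S)"
  proof (cases "S - L = {}")
    case True then show ?thesis by (metis sum.empty zero_le)
  next
    case False
    then obtain i where i: "i \<in> S" "i \<notin> L" by blast
    have mm: "min m (length ys) = m" using i S by (auto simp: L_def)
    have cL: "card L = m" using mm by (simp add: L_def)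
    have "card (S - L) = card S - card (S \<inter> L)" using fS by (simp add: card_Diff_subset_Int)
    moreover have "card (L - S) = card L - card (L \<inter> S)" using fL by (simp add: card_Diff_subset_Int)
    moreover have "card (S \<inter> L) \<le> card S" using fS by (simp add: card_mono)
    ultimately have "card (S - L) \<le> card (L - S)" using cS cL by (simp add: Int_commute)
    moreover have "\<forall>a\<in>S - L. \<forall>b\<in>L - S. ys ! a \<le> ys ! b"
    proof (intro ballI)
      fix a b assume a: "a \<in> S - L" and b: "b \<in> L - S"
      have "b \<le> a" "a < length ys" using a b S mm by (auto simp: L_def)
      thus "ys ! a \<le> ys ! b" using desc by blast
    qed
    ultimately show ?thesis by (intro card_le_sum) (use fS fL in auto)
  qed
  thus ?thesis using sS sL tl by (simp add: Int_commute)
qed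

lemma top4: "F n 4 \<le> top4_binom_sum (n+2)"
proof -
  define T where "T = {j. n < 2*j+4 \<and> 2*j \<le> n+4}"
  define T' where "T' = T \<inter> {..n}"
  define xs where "xs = map (\<lambda>j. n choose j) [0..<n+1]"
  define ys where "ys = rev (sort xs)"
  have fT: "finite T" unfolding T_def by (rule finite_subset[of _ "{..n+4}"]) auto
  have "F n 4 = sum (\<lambda>j. n choose j) T" by (simp add: F_set T_def)
  also have "\<dots> = sum (\<lambda>j. n choose j) T'"
    unfolding T'_def by (rule sum.mono_neutral_right) (use fT in auto)
  also have "\<dots> = sum ((!) xs) T'"
    by (intro sum.cong) (auto simp: T'_def xs_def nth_append simp del: upt_Suc)
  finally have e1: "F n 4 = sum ((!) xs) T'" .
  have cT: "card T' \<le> 4"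
  proof -
    have "T' \<subseteq> {(n-2) div 2..<(n-2) div 2 + 4}" unfolding T'_def T_def by auto
    hence "card T' \<le> card {(n-2) div 2..<(n-2) div 2 + 4}" by (intro card_mono) auto
    thus ?thesis by simp
  qed
  have "mset xs = mset ys" by (simp add: ys_def)
  then obtain \<phi> where phi: "bij_betw \<phi> {..<length xs} {..<length ys}" "\<forall>i<length xs. xs ! i = ys ! (\<phi> i)"
    using permutation_Ex_bij by blast
  have lxs: "length xs = n+1" by (simp add: xs_def)
  have T'sub: "T' \<subseteq> {..<length xs}" by (auto simp: T'_def lxs)
  have inj: "inj_on \<phi> T'" using phi(1) T'sub bij_betw_imp_inj_on inj_on_subset by blast
  have "sum ((!) xs) T' = sum ((!) ys) (\<phi> ` T')"
    by (subst sum.reindex[OF inj]) (use phi(2) T'sub in \<open>auto intro!: sum.cong\<close>)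
  also have "\<dots> \<le> sum_list (take 4 ys)"
  proof (rule sum_top)
    show "\<forall>i j. i \<le> j \<longrightarrow> j < length ys \<longrightarrow> ys ! j \<le> ys ! i"
    proof (intro allI impI)
      fix i j assume ij: "i \<le> j" "j < length ys"
      have s: "sorted (sort xs)" by simp
      have "ys ! j = sort xs ! (length xs - Suc j)" "ys ! i = sort xs ! (length xs - Suc i)"
        using ij by (auto simp: ys_def rev_nth)
      moreover have "length ys = length xs" by (simp add: ys_def)
      ultimately show "ys ! j \<le> ys ! i" using ij sorted_nth_mono[OF s, of "length xs - Suc j" "length xs - Suc i"]
        by simp
    qed
    show "\<phi> ` T' \<subseteq> {..<length ys}" using phi(1) T'sub bij_betw_imp_surj_on by blast
    show "card (\<phi> ` T') \<le> 4" using cT card_image[OF inj] by simp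
  qed
  finally show ?thesis using e1 by (simp add: top4_binom_sum_def xs_def ys_def)
qed

lemma sum4: "distinct [a,b,c,d] \<Longrightarrow> sum f {a,b,c,d} = f a + f b + f c + (f d :: nat)"
  by (simp add: add.assoc)

lemma F_even: "F (2*t) 4 = (if t = 0 then 1 else (2*t choose (t-1)) + (2*t choose t) + (2*t choose (t+1)) + (2*t choose (t+2)))"
proof (cases "t = 0")
  case True
  have "{j. 0 < 2*j+4 \<and> 2*j \<le> (4::nat)} = {0,1,2}" by auto
  then show ?thesis using True by (simp add: F_set)
next
  case False
  have "{j. 2*t < 2*j+4 \<and> 2*j \<le> 2*t+4} = {t-1, t, t+1, t+2}" using False by auto
  hence "F (2*t) 4 = sum (\<lambda>j. 2*t choose j) {t-1, t, t+1, t+2}" by (simp only: F_set)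
  also have "\<dots> = (2*t choose (t-1)) + (2*t choose t) + (2*t choose (t+1)) + (2*t choose (t+2))"
    by (rule sum4) (use False in auto)
  finally show ?thesis using False by simp
qed

lemma F_odd: "t \<ge> 1 \<Longrightarrow> F (2*t+1) 4 = (2*t+1 choose (t-1)) + (2*t+1 choose t) + (2*t+1 choose (t+1)) + (2*t+1 choose (t+2))"
proof -
  assume t: "t \<ge> 1"
  have "{j. 2*t+1 < 2*j+4 \<and> 2*j \<le> 2*t+1+4} = {t-1, t, t+1, t+2}" using t by auto
  hence "F (2*t+1) 4 = sum (\<lambda>j. 2*t+1 choose j) {t-1, t, t+1, t+2}" by (simp only: F_set)
  also have "\<dots> = (2*t+1 choose (t-1)) + (2*t+1 choose t) + (2*t+1 choose (t+1)) + (2*t+1 choose (t+2))"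
    by (rule sum4) (use t in auto)
  finally show ?thesis .
qed

lemma partA:
  assumes "2 \<le> k" "even k" "is_partition \<mu>" "length \<mu> = k" "\<not> all_parts_equal \<mu>"
  shows "card (perpB \<mu>) < card (perpB (replicate k 1))"
proof -
  have "k = 2*(k div 2 - 1) + 2" using assms(1,2) by presburger
  then obtain t where k: "k = 2*t+2" by blast
  have c1: "card (perpB \<mu>) \<le> F (2*t) 4" using part_bound[OF assms(3,4,1,5)] k by simp
  have "card (perpB (replicate k 1)) = NN (replicate k 1) {2 * int (t+1) - int k}"
    by (simp add: card_perpB k)
  also have "\<dots> = k choose (t+1)" by (rule NN_ones)
  finally have c2: "card (perpB (replicate k 1)) = (2*t+2) choose (t+1)" using k by simp
  have "F (2*t) 4 < (2*t+2) choose (t+1)"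
  proof (cases "t = 0")
    case True then show ?thesis using F_even[of 0] by simp
  next
    case False
    then obtain u where u: "t = Suc u" by (cases t) auto
    have lt: "2*t choose (t+2) < 2*t choose t"
    proof (cases "t+2 \<le> 2*t")
      case True then show ?thesis by (intro binomial_strict_antimono) auto
    next
      case False
      have "2*t choose (t+2) = 0" using False by (intro binomial_eq_0) simp
      moreover have "0 < 2*t choose t" by (rule zero_less_binomial) simp
      ultimately show ?thesis by linarith
    qed
    have "(2*t+2) choose (t+1) = (2*t choose (t-1)) + (2*t choose t) + (2*t choose t) + (2*t choose (t+1))"
      using u by simp
    then show ?thesis using lt False by (simp add: F_even)
  qed
  thus ?thesis using c1 c2 by simp
qed

lemma perpB_equal_odd:
  assumes "odd k" "length \<mu> = k" "all_parts_equal \<mu>" "is_partition \<mu>" "k \<ge> 1"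
  shows "card (perpB \<mu>) = 0"
proof -
  have ne: "\<mu> \<noteq> []" using assms by auto
  define c where "c = hd \<mu>"
  have "\<forall>x\<in>set \<mu>. x = c" using assms(3) ne by (auto simp: all_parts_equal_def c_def)
  hence mu: "\<mu> = replicate k c" using assms(2) by (metis replicate_length_same)
  have c1: "c \<ge> 1" using assms(4) ne by (simp add: is_partition_def c_def)
  have "{y\<in>sv (length (map int \<mu>)). dot (map int \<mu>) y \<in> {0}} = {}"
  proof (rule ccontr)
    assume "\<not> ?thesis"
    then obtain y where y: "y \<in> sv k" "dot (replicate k (int c)) y = 0"
      using assms(2) by (auto simp: mu map_replicate)
    obtain p where p: "dot (replicate k 1) y = 2 * int p - int k" using dot_ones_par[OF y(1)] by blast
    have "int c * (2 * int p - int k) = 0" using y(2) p dot_rep[of k "int c" y] by simp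
    hence "2 * int p = int k" using c1 by simp
    thus False using assms(1) by presburger
  qed
  thus ?thesis unfolding card_perpB NN_def by (simp only: card.empty)
qed

lemma partB:
  assumes "5 \<le> k" "odd k" "is_partition \<mu>" "length \<mu> = k"
  shows "card (perpB \<mu>) \<le> card (perpB (2 # replicate (k - 1) 1))"
proof (cases "all_parts_equal \<mu>")
  case True then show ?thesis using perpB_equal_odd assms by simp
next
  case False
  have "k = 2*(k div 2 - 1) + 3 \<and> k div 2 - 1 \<ge> 1" using assms(1,2) by presburger
  then obtain t where k: "k = 2*t+3" "t \<ge> 1" by blast
  have c1: "card (perpB \<mu>) \<le> F (2*t+1) 4" using part_bound[OF assms(3,4) _ False] assms(1) k by simp
  have "card (perpB (2 # replicate (k - 1) 1)) = NN (2 # replicate (2*t+2) 1) {0}"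
    by (simp add: card_perpB k)
  also have "\<dots> = NN (replicate (2*t+2) 1) {2 * int t - int (2*t+2)} + NN (replicate (2*t+2) 1) {2 * int (t+2) - int (2*t+2)}"
    by (simp add: NN_cons)
  also have "\<dots> = (2*t+2 choose t) + (2*t+2 choose (t+2))" by (simp only: NN_ones)
  finally have c2: "card (perpB (2 # replicate (k - 1) 1)) = (2*t+2 choose t) + (2*t+2 choose (t+2))" .
  obtain u where u: "t = Suc u" using k by (cases t) auto
  have "F (2*t+1) 4 = (2*t+2 choose t) + (2*t+2 choose (t+2))"
    using F_odd[OF k(2)] u by simp
  thus ?thesis using c1 c2 by simp
qed

theorem mainTheorem6:
  shows "(\<forall>k l. 2 \<le> k \<and> is_partition l \<and> length l = k \<and> \<not> all_parts_equal l
            \<longrightarrow> card (perpB l) \<le> top4_binom_sum k)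
       \<and> (\<forall>k \<mu>. 2 \<le> k \<and> even k \<and> is_partition \<mu> \<and> length \<mu> = k \<and> \<not> all_parts_equal \<mu>
            \<longrightarrow> card (perpB \<mu>) < card (perpB (replicate k 1)))
       \<and> (\<forall>k \<mu>. 5 \<le> k \<and> odd k \<and> is_partition \<mu> \<and> length \<mu> = k
            \<longrightarrow> card (perpB \<mu>) \<le> card (perpB (2 # replicate (k - 1) 1)))"
proof (intro conjI allI impI)
  fix k l assume a: "2 \<le> k \<and> is_partition l \<and> length l = k \<and> \<not> all_parts_equal l"
  have "card (perpB l) \<le> F (k-2) 4" using part_bound a by blast
  also have "\<dots> \<le> top4_binom_sum (k - 2 + 2)" by (rule top4)
  also have "k - 2 + 2 = k" using a by arith
  finally show "card (perpB l) \<le> top4_binom_sum k" .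
next
  fix k \<mu> assume "2 \<le> k \<and> even k \<and> is_partition \<mu> \<and> length \<mu> = k \<and> \<not> all_parts_equal \<mu>"
  thus "card (perpB \<mu>) < card (perpB (replicate k 1))" using partA by blast
next
  fix k \<mu> assume "5 \<le> k \<and> odd k \<and> is_partition \<mu> \<and> length \<mu> = k"
  thus "card (perpB \<mu>) \<le> card (perpB (2 # replicate (k - 1) 1))" using partB by blast
qed

end
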